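(* Fix $s>0$ and $\delta\in(0,\delta_0)$. There is a constant $C=C(s,\delta)>0$ such that for every integer $n\ge1$, every partition $\lambda=1^{n_1}2^{n_2}\cdots$ of $n$, and every integer $a$ with $a\ge\delta n^{5/4}\ge 2n$, \[ \mathsf K_{a,1}=\exp\left\{\frac{n_1^3}{12a^2}-\frac{3n_1^5}{160a^4}+R\right\}\quad\text{with } |R|\le C n^{-1/4}. \]
   Context: Let $c_1>0$ be a fixed constant such that $e^{-c_1(2a)^{-2i/3}}\le g_{a,i}\le e^{c_1(2a)^{-2i/3}}$ for all integers $a,i\ge1$ (e.g. $c_1=4$), where $g_{a,i}=\frac{2i}{(2a)^i}f_{a,i}$ and $f_{a,i}=\frac1{2i}\sum_{d\mid i,\ d\text{ odd}}\mu(d)(2a)^{i/d}$ ($\mu$ the Möbius function). For $s>0$ and $n\ge1$ let $t_n\in(0,1)$ be the unique solution in $(0,1)$ of $\frac{4t}{(1+t)^2}=e^{-s/\sqrt n}$, and $\delta_0=\left[\sup_{n\ge1}\left(n^{1/4}\log(1/t_n)e^{(c_1/4)+1}\right)\right]^{-1}$. For a partition $\lambda$ of $n$ with $n_1$ parts of size $1$ and an integer $a\ge1$, \[ \mathsf K_{a,1}=\sum_{\nu=0}^{n_1}\frac1{2^{n_1}}\binom{n_1}{\nu}\frac{(a-\nu+n_1-1)!}{(a-\nu)!\,a^{n_1-1}} \] (equivalently $\mathsf K_{a,1}=\frac{n_1!}{(2a)^{n_1}}[x^{n_1}]\left(\frac{1+x}{1-x}\right)^{a}$; it equals $1$ when $n_1=0$).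 *)

theory Defs
  imports "HOL-Analysis.Analysis" "HOL-Computational_Algebra.Squarefree" "HOL-Library.Multiset"
begin

definition moebius :: "nat \<Rightarrow> int" where
  "moebius d = (if squarefree d then (-1) ^ card (prime_factors d) else 0)"

definition f_ai :: "nat \<Rightarrow> nat \<Rightarrow> real" where
  "f_ai a i = (1 / (2 * real i)) *
     (\<Sum>d | d dvd i \<and> odd d. real_of_int (moebius d) * (2 * real a) ^ (i div d))"

definition g_ai :: "nat \<Rightarrow> nat \<Rightarrow> real" where
  "g_ai a i = (2 * real i) / (2 * real a) ^ i * f_ai a i"

definition t_n :: "real \<Rightarrow> nat \<Rightarrow> real" where
  "t_n s n = (THE t. 0 < t \<and> t < 1 \<and> 4 * t / (1 + t)^2 = exp (- s / sqrt (real n)))"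

definition delta0 :: "real \<Rightarrow> real \<Rightarrow> real" where
  "delta0 c1 s = inverse (SUP n\<in>{1::nat..}. real n powr (1/4) * ln (1 / t_n s n) * exp (c1/4 + 1))"

definition is_partition :: "nat multiset \<Rightarrow> nat \<Rightarrow> bool" where
  "is_partition lam n \<longleftrightarrow> (\<forall>x\<in>#lam. 0 < x) \<and> sum_mset lam = n"

text \<open>K_{a,1} with n1 = number of parts of size 1.\<close>
definition K_a1 :: "nat \<Rightarrow> nat \<Rightarrow> real" where
  "K_a1 a n1 = (\<Sum>\<nu>=0..n1. (1 / 2 ^ n1) * real (n1 choose \<nu>) *
      fact (a - \<nu> + n1 - 1) / (fact (a - \<nu>) * real a powi (int n1 - 1)))"

end

theory Submission
  imports Defs
begin

definition Tq :: "real \<Rightarrow> nat \<Rightarrow> real" where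
  "Tq A k = (\<Sum>\<nu>\<le>Suc k. real (Suc k choose \<nu>) * pochhammer (A - real \<nu> + 1) k)"

lemma pascal_sum:
  fixes f :: "nat \<Rightarrow> real"
  shows "(\<Sum>\<nu>\<le>Suc m. real (Suc m choose \<nu>) * f \<nu>) = (\<Sum>\<nu>\<le>m. real (m choose \<nu>) * (f \<nu> + f (Suc \<nu>)))"
proof -
  have "(\<Sum>\<nu>\<le>Suc m. real (Suc m choose \<nu>) * f \<nu>) = f 0 + (\<Sum>i\<le>m. real (Suc m choose Suc i) * f (Suc i))"
    by (simp add: sum.atMost_Suc_shift del: sum.atMost_Suc)
  also have "\<dots> = f 0 + (\<Sum>i\<le>m. real (m choose i) * f (Suc i)) + (\<Sum>i\<le>m. real (m choose Suc i) * f (Suc i))"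
    by (simp add: sum.distrib algebra_simps)
  also have "(\<Sum>i\<le>m. real (m choose Suc i) * f (Suc i)) = (\<Sum>\<nu>\<le>m. real (m choose \<nu>) * f \<nu>) - f 0"
  proof -
    have "(\<Sum>\<nu>\<le>Suc m. real (m choose \<nu>) * f \<nu>) = f 0 + (\<Sum>i\<le>m. real (m choose Suc i) * f (Suc i))"
      by (simp add: sum.atMost_Suc_shift del: sum.atMost_Suc)
    moreover have "(\<Sum>\<nu>\<le>Suc m. real (m choose \<nu>) * f \<nu>) = (\<Sum>\<nu>\<le>m. real (m choose \<nu>) * f \<nu>)" by simp
    ultimately show ?thesis by linarith
  qed
  finally show ?thesis by (simp add: sum.distrib algebra_simps)
qed

lemma absorb_sum:
  fixes g :: "nat \<Rightarrow> real"
  shows "(\<Sum>\<nu>\<le>Suc p. real (Suc p choose \<nu>) * (real (Suc p) - 2 * real \<nu>) * g \<nu>)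
       = real (Suc p) * (\<Sum>\<nu>\<le>p. real (p choose \<nu>) * (g \<nu> - g (Suc \<nu>)))"
proof -
  have e1: "real (Suc p choose \<nu>) * (real (Suc p) - 2 * real \<nu>) * g \<nu>
      = real (Suc p) * real (p choose \<nu>) * g \<nu> - real \<nu> * real (Suc p choose \<nu>) * g \<nu>" if "\<nu> \<le> Suc p" for \<nu>
  proof -
    have "(Suc p - \<nu>) * (Suc p choose \<nu>) = Suc p * (p choose \<nu>)"
      using binomial_absorb_comp[of "Suc p" \<nu>] by simp
    hence "(real (Suc p) - real \<nu>) * real (Suc p choose \<nu>) = real (Suc p) * real (p choose \<nu>)"
      using that by (metis of_nat_diff of_nat_mult)
    thus ?thesis by (simp add: algebra_simps)
  qed
  have s1: "(\<Sum>\<nu>\<le>Suc p. real (Suc p) * real (p choose \<nu>) * g \<nu>) = real (Suc p) * (\<Sum>\<nu>\<le>p. real (p choose \<nu>) * g \<nu>)"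
    by (simp add: sum_distrib_left algebra_simps binomial_eq_0)
  have s2: "(\<Sum>\<nu>\<le>Suc p. real \<nu> * real (Suc p choose \<nu>) * g \<nu>) = real (Suc p) * (\<Sum>i\<le>p. real (p choose i) * g (Suc i))"
  proof -
    have "(\<Sum>\<nu>\<le>Suc p. real \<nu> * real (Suc p choose \<nu>) * g \<nu>) = (\<Sum>i\<le>p. real (Suc i) * real (Suc p choose Suc i) * g (Suc i))"
      by (simp add: sum.atMost_Suc_shift del: sum.atMost_Suc of_nat_Suc)
    also have "\<dots> = (\<Sum>i\<le>p. real (Suc p) * real (p choose i) * g (Suc i))"
    proof (rule sum.cong[OF refl])
      fix i
      have "Suc i * (Suc p choose Suc i) = Suc p * (p choose i)"
        using binomial_absorption[of i "Suc p"] by simp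
      hence "real (Suc i) * real (Suc p choose Suc i) = real (Suc p) * real (p choose i)"
        by (metis of_nat_mult)
      thus "real (Suc i) * real (Suc p choose Suc i) * g (Suc i) = real (Suc p) * real (p choose i) * g (Suc i)"
        by simp
    qed
    finally show ?thesis by (simp add: sum_distrib_left algebra_simps)
  qed
  have "(\<Sum>\<nu>\<le>Suc p. real (Suc p choose \<nu>) * (real (Suc p) - 2 * real \<nu>) * g \<nu>)
      = (\<Sum>\<nu>\<le>Suc p. real (Suc p) * real (p choose \<nu>) * g \<nu> - real \<nu> * real (Suc p choose \<nu>) * g \<nu>)"
    by (rule sum.cong[OF refl]) (use e1 in auto)
  also have "\<dots> = real (Suc p) * (\<Sum>\<nu>\<le>p. real (p choose \<nu>) * g \<nu>) - real (Suc p) * (\<Sum>i\<le>p. real (p choose i) * g (Suc i))"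
    by (simp only: sum_subtractf s1 s2)
  finally show ?thesis by (simp add: sum_subtractf algebra_simps)
qed

lemma Tq_rec: "Tq A (Suc (Suc k)) = 2 * A * Tq A (Suc k) + real (Suc (Suc k)) * real (Suc k) * Tq A k"
proof -
  define m where "m = Suc (Suc k)"
  define g where "g \<nu> = pochhammer (A - real \<nu> + 1) (Suc k)" for \<nu>
  have "Tq A m = (\<Sum>\<nu>\<le>Suc m. real (Suc m choose \<nu>) * pochhammer (A - real \<nu> + 1) m)"
    by (simp add: Tq_def)
  also have "\<dots> = (\<Sum>\<nu>\<le>m. real (m choose \<nu>) * (pochhammer (A - real \<nu> + 1) m + pochhammer (A - real (Suc \<nu>) + 1) m))"
    by (rule pascal_sum)
  also have "\<dots> = (\<Sum>\<nu>\<le>m. real (m choose \<nu>) * (2 * A * g \<nu> + (real m - 2 * real \<nu>) * g \<nu>))"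
  proof (rule sum.cong[OF refl])
    fix \<nu>
    have a: "pochhammer (A - real \<nu> + 1) m = g \<nu> * (A - real \<nu> + 1 + real (Suc k))"
      unfolding m_def g_def by (rule pochhammer_Suc)
    have b: "pochhammer (A - real (Suc \<nu>) + 1) m = (A - real \<nu>) * g \<nu>"
      unfolding m_def g_def by (subst pochhammer_rec) (simp add: algebra_simps)
    show "real (m choose \<nu>) * (pochhammer (A - real \<nu> + 1) m + pochhammer (A - real (Suc \<nu>) + 1) m)
        = real (m choose \<nu>) * (2 * A * g \<nu> + (real m - 2 * real \<nu>) * g \<nu>)"
      unfolding a b by (simp add: m_def algebra_simps)
  qed
  also have "\<dots> = 2 * A * (\<Sum>\<nu>\<le>m. real (m choose \<nu>) * g \<nu>) + (\<Sum>\<nu>\<le>m. real (m choose \<nu>) * (real m - 2 * real \<nu>) * g \<nu>)"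
  proof -
    have "(\<Sum>\<nu>\<le>m. real (m choose \<nu>) * (2 * A * g \<nu> + (real m - 2 * real \<nu>) * g \<nu>))
      = (\<Sum>\<nu>\<le>m. 2 * A * (real (m choose \<nu>) * g \<nu>) + real (m choose \<nu>) * (real m - 2 * real \<nu>) * g \<nu>)"
      by (rule sum.cong[OF refl]) (simp add: algebra_simps)
    also have "\<dots> = (\<Sum>\<nu>\<le>m. 2 * A * (real (m choose \<nu>) * g \<nu>)) + (\<Sum>\<nu>\<le>m. real (m choose \<nu>) * (real m - 2 * real \<nu>) * g \<nu>)"
      by (rule sum.distrib)
    finally show ?thesis by (simp only: sum_distrib_left)
  qed
  also have "(\<Sum>\<nu>\<le>m. real (m choose \<nu>) * g \<nu>) = Tq A (Suc k)"
    unfolding Tq_def g_def m_def by (rule refl)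
  also have "(\<Sum>\<nu>\<le>m. real (m choose \<nu>) * (real m - 2 * real \<nu>) * g \<nu>)
      = real m * (\<Sum>\<nu>\<le>Suc k. real (Suc k choose \<nu>) * (g \<nu> - g (Suc \<nu>)))"
    unfolding m_def by (rule absorb_sum)
  also have "(\<Sum>\<nu>\<le>Suc k. real (Suc k choose \<nu>) * (g \<nu> - g (Suc \<nu>))) = real (Suc k) * Tq A k"
  proof -
    have gg: "g \<nu> - g (Suc \<nu>) = real (Suc k) * pochhammer (A - real \<nu> + 1) k" for \<nu>
    proof -
      have a: "g \<nu> = pochhammer (A - real \<nu> + 1) k * (A - real \<nu> + 1 + real k)"
        unfolding g_def by (rule pochhammer_Suc)
      have b: "g (Suc \<nu>) = (A - real \<nu>) * pochhammer (A - real \<nu> + 1) k"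
        unfolding g_def by (subst pochhammer_rec) (simp add: algebra_simps)
      show ?thesis unfolding a b by (simp add: algebra_simps)
    qed
    show ?thesis unfolding Tq_def sum_distrib_left
      by (rule sum.cong[OF refl]) (simp only: gg mult.left_commute)
  qed
  finally show ?thesis unfolding m_def by (simp only: mult.assoc)
qed


fun kseq :: "real \<Rightarrow> nat \<Rightarrow> real" where
  "kseq A 0 = 1"
| "kseq A (Suc 0) = 1"
| "kseq A (Suc (Suc m)) = kseq A (Suc m) + real (Suc m) * real m / (4 * A^2) * kseq A m"

lemma Tq_kseq:
  assumes "A \<noteq> 0"
  shows "Tq A k = 2^(Suc k) * A^k * kseq A (Suc k) \<and> Tq A (Suc k) = 2^(Suc (Suc k)) * A^(Suc k) * kseq A (Suc (Suc k))"
proof (induction k)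
  case 0
  have "Tq A 0 = 2" by (simp add: Tq_def)
  moreover have "Tq A 1 = 4 * A" by (simp add: Tq_def numeral_2_eq_2 algebra_simps)
  ultimately show ?case by simp
next
  case (Suc k)
  have alg: "2^(Suc(Suc(Suc k))) * A^(Suc(Suc k)) * (K2 + c/(4*A^2)*K1)
      = 2*A*(2^(Suc(Suc k))*A^(Suc k)*K2) + c*(2^(Suc k)*A^k*K1)" for K1 K2 c :: real
  proof -
    have c: "A*A*(c/(4*A^2)) = c/4" using assms by (simp add: power2_eq_square)
    have "2^(Suc(Suc(Suc k))) * A^(Suc(Suc k)) * (K2 + c/(4*A^2)*K1)
       = 8 * 2^k * A^k * (A*A*K2) + 2 * 2^k * A^k * K1 * (4 * (A*A*(c/(4*A^2))))"
      by (simp add: algebra_simps)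
    also have "\<dots> = 2*A*(2^(Suc(Suc k))*A^(Suc k)*K2) + c*(2^(Suc k)*A^k*K1)"
      unfolding c by (simp add: algebra_simps)
    finally show ?thesis .
  qed
  have "Tq A (Suc (Suc k)) = 2 * A * Tq A (Suc k) + real (Suc (Suc k)) * real (Suc k) * Tq A k"
    by (rule Tq_rec)
  also have "\<dots> = 2*A*(2^(Suc(Suc k))*A^(Suc k)*kseq A (Suc(Suc k))) + (real (Suc (Suc k)) * real (Suc k))*(2^(Suc k)*A^k*kseq A (Suc k))"
    using Suc.IH by (simp only: mult.assoc)
  also have "\<dots> = 2^(Suc (Suc (Suc k))) * A^(Suc (Suc k)) * kseq A (Suc (Suc (Suc k)))"
    unfolding kseq.simps(3)[of A "Suc k"] by (rule alg[symmetric])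
  finally show ?case using Suc.IH by blast
qed

lemma fact_poch: "(fact (x + j) :: real) = fact x * pochhammer (real x + 1) j"
  by (induction j) (simp_all add: pochhammer_Suc algebra_simps)

lemma K_kseq:
  assumes "1 \<le> a" "m \<le> a"
  shows "K_a1 a m = kseq (real a) m"
proof (cases m)
  case 0
  have "(fact a::real) = real a * fact (a - 1)" using assms by (subst fact_reduce) auto
  then show ?thesis using 0 assms by (simp add: K_a1_def)
next
  case (Suc k)
  have "K_a1 a m = (\<Sum>\<nu>\<le>Suc k. real (Suc k choose \<nu>) * pochhammer (real a - real \<nu> + 1) k) / (2^(Suc k) * real a ^ k)"
    unfolding K_a1_def Suc atLeast0AtMost sum_divide_distrib
  proof (rule sum.cong[OF refl])
    fix \<nu> assume "\<nu> \<in> {..Suc k}"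
    hence nu: "\<nu> \<le> a" using assms Suc by auto
    have f: "fact (a - \<nu> + Suc k - 1) = (fact (a - \<nu>) :: real) * pochhammer (real a - real \<nu> + 1) k"
      using fact_poch[of "a - \<nu>" k] nu by (simp add: of_nat_diff)
    have p: "real a powi (int (Suc k) - 1) = real a ^ k" by (simp add: power_int_def)
    show "1 / 2 ^ Suc k * real (Suc k choose \<nu>) * fact (a - \<nu> + Suc k - 1) / (fact (a - \<nu>) * real a powi (int (Suc k) - 1))
        = real (Suc k choose \<nu>) * pochhammer (real a - real \<nu> + 1) k / (2 ^ Suc k * real a ^ k)"
      unfolding f p
    proof -
      have nz: "(fact (a-\<nu>)::real) \<noteq> 0" by simp
      show "1 / 2 ^ Suc k * real (Suc k choose \<nu>) * (fact (a - \<nu>) * pochhammer (real a - real \<nu> + 1) k) / (fact (a - \<nu>) * real a ^ k) =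
    real (Suc k choose \<nu>) * pochhammer (real a - real \<nu> + 1) k / (2 ^ Suc k * real a ^ k)"
        using nz by (simp add: divide_simps del: of_nat_Suc power_Suc)
    qed
  qed
  also have "\<dots> = Tq (real a) k / (2^(Suc k) * real a ^ k)"
    unfolding Tq_def ..
  also have "\<dots> = kseq (real a) m"
  proof -
    have "real a \<noteq> 0" using assms by simp
    hence "Tq (real a) k = (2^(Suc k) * real a ^ k) * kseq (real a) (Suc k)" using Tq_kseq[of "real a" k] by simp
    moreover have "(2^(Suc k) * real a ^ k) \<noteq> 0" using \<open>real a \<noteq> 0\<close> by simp
    ultimately show ?thesis using Suc by simp
  qed
  finally show ?thesis .
qed

lemma ln_lower2:
  fixes x :: real assumes "0 \<le> x"
  shows "x - x^2/2 \<le> ln (1 + x)"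
proof -
  let ?f = "\<lambda>t::real. ln (1 + t) - t + t^2/2"
  have "?f 0 \<le> ?f x"
  proof (rule DERIV_nonneg_imp_nondecreasing[OF assms])
    fix t :: real assume t: "0 \<le> t" "t \<le> x"
    have "(?f has_real_derivative (1/(1+t) - 1 + t)) (at t)"
      using t by (auto intro!: derivative_eq_intros simp: power2_eq_square field_simps)
    moreover have "1/(1+t) - 1 + t = t^2/(1+t)" using t by (simp add: field_simps power2_eq_square)
    moreover have "t^2/(1+t) \<ge> 0" using t by simp
    ultimately show "\<exists>y. (?f has_real_derivative y) (at t) \<and> y \<ge> 0" by auto
  qed
  thus ?thesis by simp
qed

lemma ln_upper3:
  fixes x :: real assumes "0 \<le> x"
  shows "ln (1 + x) \<le> x - x^2/2 + x^3/3"
proof -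
  let ?f = "\<lambda>t::real. t - t^2/2 + t^3/3 - ln (1 + t)"
  have "?f 0 \<le> ?f x"
  proof (rule DERIV_nonneg_imp_nondecreasing[OF assms])
    fix t :: real assume t: "0 \<le> t" "t \<le> x"
    have "(?f has_real_derivative (1 - t + t^2 - 1/(1+t))) (at t)"
      using t by (auto intro!: derivative_eq_intros simp: power2_eq_square field_simps)
    moreover have "1 - t + t^2 - 1/(1+t) = t^3/(1+t)" using t by (simp add: field_simps power2_eq_square power3_eq_cube)
    moreover have "t^3/(1+t) \<ge> 0" using t by simp
    ultimately show "\<exists>y. (?f has_real_derivative y) (at t) \<and> y \<ge> 0" by auto
  qed
  thus ?thesis by simp
qed

lemma step_bound:
  fixes e e' r r' :: real
  assumes e0: "0 \<le> e" and ee': "e \<le> e'" and e'h: "e' \<le> 1/2"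
    and rl: "e - e^2 \<le> r" and ru: "r \<le> e" and r'def: "r' = e' / (1 + r)"
  shows "e' - e'^2 \<le> r' \<and> r' \<le> e' \<and> \<bar>ln (1 + r') - (e' - 3/2 * e'^2)\<bar> \<le> e' * (e' - e) + 4 * e'^3"
proof -
  have e'0: "0 \<le> e'" using e0 ee' by linarith
  have eh: "e \<le> 1/2" using ee' e'h by linarith
  have "e^2 \<le> e * (1/2)" unfolding power2_eq_square using e0 eh by (intro mult_left_mono) auto
  hence r0: "0 \<le> r" using rl e0 by linarith
  have r1: "r \<le> 1/2" using ru eh by linarith
  have pos: "1 + r > 0" using r0 by linarith
  have "e' * 1 \<le> e' * (1 + r)" using e'0 r0 by (intro mult_left_mono) auto
  hence r'u: "r' \<le> e'" unfolding r'def using pos by (simp add: divide_le_eq)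
  have "e' * (1 - r) * (1 + r) \<le> e'" 
  proof -
    have "e' * (1 - r) * (1 + r) = e' - e' * r^2" by (simp add: algebra_simps power2_eq_square)
    thus ?thesis using e'0 by (simp add: mult_nonneg_nonneg)
  qed
  hence r'l1: "e' * (1 - r) \<le> r'" unfolding r'def using pos by (simp add: le_divide_eq)
  have "e' * r \<le> e' * e" using ru e'0 by (rule mult_left_mono)
  hence r'l: "e' - e' * e \<le> r'" using r'l1 by (simp add: algebra_simps)
  have "e' * e \<le> e' * e'" using ee' e'0 by (rule mult_left_mono)
  hence r'l2: "e' - e'^2 \<le> r'" using r'l by (simp add: power2_eq_square)
  have "e' \<le> e' * (1 - r + r^2) * (1 + r)"
  proof -
    have "e' * (1 - r + r^2) * (1 + r) = e' + e' * r^3" by (simp add: algebra_simps power2_eq_square power3_eq_cube)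
    thus ?thesis using e'0 r0 by simp
  qed
  hence r'u1: "r' \<le> e' * (1 - r + r^2)" unfolding r'def using pos by (simp add: divide_le_eq)
  have "r^2 \<le> e^2" using r0 ru by (simp add: power_mono)
  hence "1 - r + r^2 \<le> 1 - (e - e^2) + e^2" using rl by linarith
  hence "e' * (1 - r + r^2) \<le> e' * (1 - (e - e^2) + e^2)" using e'0 by (rule mult_left_mono)
  moreover have "e' * e^2 \<le> e' * e'^2" using e'0 e0 ee' by (intro mult_left_mono power_mono) auto
  ultimately have r'u2: "r' \<le> e' - e' * e + 2 * e'^3" using r'u1 by (simp add: algebra_simps power2_eq_square power3_eq_cube)
  have r'0: "0 \<le> r'" using r'def e'0 pos by simp
  have lnl: "r' - r'^2/2 \<le> ln (1 + r')" using r'0 by (rule ln_lower2)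
  have lnu: "ln (1 + r') \<le> r' - r'^2/2 + r'^3/3" using r'0 by (rule ln_upper3)
  have c3: "r'^3 \<le> e'^3" using r'0 r'u by (simp add: power_mono)
  have sq1: "r'^2 \<le> e'^2" using r'0 r'u by (simp add: power_mono)
  have "e'^2 \<le> e' * (1/2)" unfolding power2_eq_square using e'0 e'h by (intro mult_left_mono) auto
  hence lpos: "0 \<le> e' - e'^2" using e'0 by linarith
  hence "(e' - e'^2)^2 \<le> r'^2" using r'l2 by (simp add: power_mono)
  moreover have "(e' - e'^2)^2 = e'^2 - 2 * e'^3 + e'^2 * e'^2" by (simp add: algebra_simps power2_eq_square power3_eq_cube)
  ultimately have sq2: "e'^2 - 2 * e'^3 \<le> r'^2" by (smt (verit) zero_le_power2 mult_nonneg_nonneg)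
  have ed: "0 \<le> e' * (e' - e)" using e'0 ee' by simp
  have c30: "0 \<le> e'^3" using e'0 by simp
  have A: "ln (1 + r') - (e' - 3/2 * e'^2) \<le> e' * (e' - e) + 4 * e'^3"
  proof -
    have "ln (1 + r') - (e' - 3/2 * e'^2) \<le> (r' - e' + e'^2) - (r'^2 - e'^2)/2 + r'^3/3" using lnu by argo
    also have "\<dots> \<le> (e'^2 - e' * e + 2 * e'^3) + e'^3 + e'^3/3" using r'u2 sq2 c3 by argo
    also have "\<dots> \<le> e' * (e' - e) + 4 * e'^3" using c30 by (simp add: algebra_simps power2_eq_square)
    finally show ?thesis .
  qed
  have B: "- (e' * (e' - e) + 4 * e'^3) \<le> ln (1 + r') - (e' - 3/2 * e'^2)"
  proof -
    have "(r' - e' + e'^2) \<ge> e'^2 - e' * e" using r'l by argo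
    moreover have "e'^2 - e' * e = e' * (e' - e)" by (simp add: algebra_simps power2_eq_square)
    ultimately have "0 \<le> r' - e' + e'^2" using ed by argo
    hence "0 \<le> (r' - e' + e'^2) - (r'^2 - e'^2)/2" using sq1 by argo
    thus ?thesis using lnl ed c30 by argo
  qed
  show ?thesis using A B r'l2 r'u by (simp add: abs_le_iff)
qed

lemma kseq_pos: "A \<noteq> 0 \<Longrightarrow> kseq A m > 0"
proof (induction A m rule: kseq.induct)
  case (3 A m)
  have "0 \<le> real (Suc m) * real m / (4 * A^2) * kseq A m"
    using 3 by (intro mult_nonneg_nonneg divide_nonneg_nonneg) auto
  moreover have "kseq A (Suc (Suc m)) = kseq A (Suc m) + real (Suc m) * real m / (4 * A^2) * kseq A m"
    by (rule kseq.simps(3))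
  moreover have "kseq A (Suc m) > 0" using 3 by simp
  ultimately show ?case by linarith
qed auto

definition ee :: "real \<Rightarrow> nat \<Rightarrow> real" where
  "ee A j = real j * (real j - 1) / (4 * A^2)"

definition rho :: "real \<Rightarrow> nat \<Rightarrow> real" where
  "rho A j = kseq A (Suc j) / kseq A j - 1"

lemma rho0: "rho A 0 = 0" by (simp add: rho_def)
lemma ee0: "ee A 0 = 0" by (simp add: ee_def)

lemma rho_rec:
  assumes "A \<noteq> 0"
  shows "rho A (Suc j) = ee A (Suc j) / (1 + rho A j)"
proof -
  have p1: "kseq A j > 0" and p2: "kseq A (Suc j) > 0" using kseq_pos assms by auto
  have "1 + rho A j = kseq A (Suc j) / kseq A j" by (simp add: rho_def)
  hence "ee A (Suc j) / (1 + rho A j) = ee A (Suc j) * kseq A j / kseq A (Suc j)" by simp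
  also have "\<dots> = real (Suc j) * real j / (4 * A^2) * kseq A j / kseq A (Suc j)"
    by (simp add: ee_def)
  also have "\<dots> = rho A (Suc j)"
  proof (cases j)
    case 0 thus ?thesis by (simp add: rho_def)
  next
    case (Suc i)
    show ?thesis unfolding rho_def Suc kseq.simps(3) using p2 Suc by (simp add: field_simps)
  qed
  finally show ?thesis ..
qed

lemma ln_kseq:
  assumes "A \<noteq> 0"
  shows "ln (kseq A m) = (\<Sum>j<m. ln (1 + rho A j))"
proof (induction m)
  case 0 thus ?case by simp
next
  case (Suc m)
  have p1: "kseq A m > 0" and p2: "kseq A (Suc m) > 0" using kseq_pos assms by auto
  have "1 + rho A m = kseq A (Suc m) / kseq A m" by (simp add: rho_def)
  hence "ln (1 + rho A m) = ln (kseq A (Suc m)) - ln (kseq A m)" using p1 p2 by (simp add: ln_div)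
  thus ?case using Suc by simp
qed

lemma ee_nonneg: "0 \<le> ee A j"
proof (cases j)
  case 0 thus ?thesis by (simp add: ee_def)
next
  case (Suc i) thus ?thesis unfolding ee_def by (intro divide_nonneg_nonneg mult_nonneg_nonneg) auto
qed

lemma ee_mono: assumes "i \<le> j" shows "ee A i \<le> ee A j"
proof (cases i)
  case 0 thus ?thesis using ee_nonneg[of A j] by (simp add: ee_def)
next
  case (Suc k)
  have "real i * (real i - 1) \<le> real j * (real j - 1)"
    using assms Suc by (intro mult_mono) auto
  thus ?thesis unfolding ee_def by (intro divide_right_mono) auto
qed

lemma main_inv:
  assumes A: "A \<noteq> 0" and small: "ee A m \<le> 1/2" and jm: "j \<le> m"
  shows "ee A j - (ee A j)^2 \<le> rho A j \<and> rho A j \<le> ee A j \<and>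
    \<bar>ln (1 + rho A j) - (ee A j - 3/2 * (ee A j)^2)\<bar> \<le> ee A j * (ee A j - ee A (j - 1)) + 4 * (ee A j)^3"
  using jm
proof (induction j)
  case 0 thus ?case by (simp add: rho0 ee0)
next
  case (Suc j)
  have IH: "ee A j - (ee A j)^2 \<le> rho A j" "rho A j \<le> ee A j" using Suc by auto
  have "ee A (Suc j) \<le> 1/2" using ee_mono[OF Suc.prems, of A] small by linarith
  from step_bound[OF ee_nonneg ee_mono[of j "Suc j"] this IH rho_rec[OF A]]
  show ?case by simp
qed

lemma S1: "(\<Sum>j<m. real j * (real j - 1)) = real m * (real m - 1) * (real m - 2) / 3"
proof (induction m)
  case (Suc m)
  have "(\<Sum>j<Suc m. real j * (real j - 1)) = real m * (real m - 1) * (real m - 2) / 3 + real m * (real m - 1)"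
    using Suc by simp
  also have "\<dots> = real (Suc m) * (real (Suc m) - 1) * (real (Suc m) - 2) / 3"
    unfolding of_nat_Suc by (simp add: field_simps)
  finally show ?case .
qed simp

lemma S2: "(\<Sum>j<m. (real j * (real j - 1))^2) = (6 * real m^5 - 30 * real m^4 + 50 * real m^3 - 30 * real m^2 + 4 * real m) / 30"
proof (induction m)
  case (Suc m)
  have "(\<Sum>j<Suc m. (real j * (real j - 1))^2) = (6 * real m^5 - 30 * real m^4 + 50 * real m^3 - 30 * real m^2 + 4 * real m) / 30 + (real m * (real m - 1))^2"
    using Suc by simp
  also have "\<dots> = (6 * real (Suc m)^5 - 30 * real (Suc m)^4 + 50 * real (Suc m)^3 - 30 * real (Suc m)^2 + 4 * real (Suc m)) / 30"
  proof -
    have "(6 * x^5 - 30 * x^4 + 50 * x^3 - 30 * x^2 + 4 * x) + 30 * (x * (x - 1))^2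
      = (6 * (x+1)^5 - 30 * (x+1)^4 + 50 * (x+1)^3 - 30 * (x+1)^2 + 4 * (x+1))" for x :: real
      by algebra
    from this[of "real m"] show ?thesis unfolding of_nat_Suc by argo
  qed
  finally show ?case .
qed simp

lemma pb1: "\<bar>- 3 * real m^2 + 2 * real m\<bar> \<le> 3 * real m^2"
proof (cases "m = 0")
  case False
  hence "1 \<le> real m" by simp
  hence "real m * 1 \<le> real m * real m" by (intro mult_left_mono) auto
  thus ?thesis by (simp add: abs_le_iff power2_eq_square)
qed simp

lemma pb2r:
  fixes x :: real assumes M: "1 \<le> x"
  shows "\<bar>- 30 * x^4 + 50 * x^3 - 30 * x^2 + 4 * x\<bar> \<le> 114 * x^4"
proof -
  have a1: "x^1 \<le> x^2" using M by (intro power_increasing) auto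
  have a: "x \<le> x^2" "x^2 \<le> x^3" "x^3 \<le> x^4"
    using M a1 by (auto intro!: power_increasing)
  have b: "0 \<le> x" "0 \<le> x^2" "0 \<le> x^3" using M by auto
  show ?thesis unfolding abs_le_iff using a b by simp
qed

lemma pb2: "\<bar>- 30 * real m^4 + 50 * real m^3 - 30 * real m^2 + 4 * real m\<bar> \<le> 114 * real m^4"
proof (cases "m = 0")
  case False
  hence M: "1 \<le> real m" by simp
  show ?thesis by (rule pb2r[OF M])
qed simp

lemma lnK_bound:
  assumes A: "A > 0" and mA: "2 * real m \<le> A"
  shows "\<bar>ln (kseq A m) - (real m^3 / (12 * A^2) - 3 * real m^5 / (160 * A^4))\<bar>
     \<le> real m^2 / (4 * A^2) + real m^4 / (2 * A^4) + real m^7 / (16 * A^6)"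
proof -
  define M where "M = real m"
  have M0: "0 \<le> M" unfolding M_def by simp
  have A0: "A \<noteq> 0" using A by simp
  define L where "L j = ln (1 + rho A j)" for j
  define Q where "Q j = ee A j - 3/2 * (ee A j)^2" for j
  have eeM: "ee A m \<le> M^2 / (4 * A^2)"
    unfolding ee_def M_def[symmetric] using A M0 by (intro divide_right_mono) (auto simp: power2_eq_square algebra_simps)
  have "M^2 \<le> (A/2)^2" using M0 mA unfolding M_def by (intro power_mono) auto
  hence "M^2 / (4 * A^2) \<le> (A/2)^2 / (4 * A^2)" using A by (intro divide_right_mono) auto
  also have "\<dots> = 1/16" using A0 by (simp add: field_simps power2_eq_square)
  finally have small: "ee A m \<le> 1/2" using eeM by linarith
  have per: "\<bar>L j - Q j\<bar> \<le> M^3 / (8 * A^4) + M^6 / (16 * A^6)" if jm: "j < m" for j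
  proof -
    have inv: "\<bar>L j - Q j\<bar> \<le> ee A j * (ee A j - ee A (j - 1)) + 4 * (ee A j)^3"
      using main_inv[OF A0 small, of j] jm unfolding L_def Q_def by simp
    have e0: "0 \<le> ee A j" by (rule ee_nonneg)
    have eu: "ee A j \<le> M^2 / (4 * A^2)" using ee_mono[of j m A] jm eeM by linarith
    have d0: "0 \<le> ee A j - ee A (j - 1)" using ee_mono[of "j - 1" j A] by linarith
    have du: "ee A j - ee A (j - 1) \<le> M / (2 * A^2)"
    proof (cases j)
      case 0 thus ?thesis using M0 by simp
    next
      case (Suc i)
      have "ee A j - ee A (j - 1) = real i / (2 * A^2)"
        unfolding Suc ee_def using A0 by (simp add: field_simps)
      moreover have "real i \<le> M" using jm Suc unfolding M_def by simp
      ultimately show ?thesis using A by (simp add: divide_right_mono)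
    qed
    have "ee A j * (ee A j - ee A (j - 1)) \<le> (M^2 / (4 * A^2)) * (M / (2 * A^2))"
      using eu du e0 d0 by (intro mult_mono) auto
    also have "\<dots> = M^3 / (8 * A^4)" using A0 by (simp add: field_simps power2_eq_square power3_eq_cube power4_eq_xxxx)
    finally have p1: "ee A j * (ee A j - ee A (j - 1)) \<le> M^3 / (8 * A^4)" .
    have "(ee A j)^3 \<le> (M^2 / (4 * A^2))^3" using eu e0 by (rule power_mono)
    also have "\<dots> = M^6 / (64 * A^6)" by (simp add: power_divide power_mult_distrib flip: power_mult)
    finally have p2: "4 * (ee A j)^3 \<le> M^6 / (16 * A^6)" by simp
    show ?thesis using inv p1 p2 by linarith
  qed
  have errsum: "\<bar>\<Sum>j<m. L j - Q j\<bar> \<le> M * (M^3 / (8 * A^4) + M^6 / (16 * A^6))"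
  proof -
    have "\<bar>\<Sum>j<m. L j - Q j\<bar> \<le> (\<Sum>j<m. \<bar>L j - Q j\<bar>)" by (rule sum_abs)
    also have "\<dots> \<le> of_nat (card {..<m}) * (M^3 / (8 * A^4) + M^6 / (16 * A^6))"
      by (rule sum_bounded_above) (use per in auto)
    finally show ?thesis unfolding M_def by simp
  qed
  have sumee: "(\<Sum>j<m. ee A j) = (M * (M - 1) * (M - 2) / 3) / (4 * A^2)"
    unfolding ee_def M_def by (simp add: sum_divide_distrib[symmetric] S1)
  have sumee2: "(\<Sum>j<m. (ee A j)^2) = ((6 * M^5 - 30 * M^4 + 50 * M^3 - 30 * M^2 + 4 * M) / 30) / (16 * A^4)"
  proof -
    have "(ee A j)^2 = (real j * (real j - 1))^2 / (16 * A^4)" for j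
      unfolding ee_def by (simp add: power_divide power_mult_distrib flip: power_mult)
    hence "(\<Sum>j<m. (ee A j)^2) = (\<Sum>j<m. (real j * (real j - 1))^2) / (16 * A^4)"
      by (simp add: sum_divide_distrib)
    thus ?thesis unfolding M_def S2 .
  qed
  have sumQ: "(\<Sum>j<m. Q j) = (\<Sum>j<m. ee A j) - 3/2 * (\<Sum>j<m. (ee A j)^2)"
    unfolding Q_def by (simp add: sum_subtractf sum_distrib_left)
  have lnK: "ln (kseq A m) = (\<Sum>j<m. L j - Q j) + (\<Sum>j<m. Q j)"
    unfolding ln_kseq[OF A0] L_def by (simp add: sum_subtractf)
  have t1: "(M * (M - 1) * (M - 2) / 3) / (4 * A^2) - M^3 / (12 * A^2) = (- 3 * M^2 + 2 * M) / (12 * A^2)"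
    using A0 by (simp add: field_simps power2_eq_square power3_eq_cube)
  have t2: "((6 * M^5 - 30 * M^4 + 50 * M^3 - 30 * M^2 + 4 * M) / 30) / (16 * A^4) - M^5 / (80 * A^4)
      = (- 30 * M^4 + 50 * M^3 - 30 * M^2 + 4 * M) / (480 * A^4)"
    using A0 by (simp add: field_simps)
  have t3: "3 * M^5 / (160 * A^4) = 3/2 * (M^5 / (80 * A^4))" by simp
  have b1: "\<bar>(- 3 * M^2 + 2 * M) / (12 * A^2)\<bar> \<le> M^2 / (4 * A^2)"
  proof -
    have "\<bar>(- 3 * M^2 + 2 * M) / (12 * A^2)\<bar> = \<bar>- 3 * M^2 + 2 * M\<bar> / (12 * A^2)" by (simp add: abs_divide)
    also have "\<dots> \<le> (3 * M^2) / (12 * A^2)" using pb1[of m] A unfolding M_def by (intro divide_right_mono) auto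
    finally show ?thesis by simp
  qed
  have b2: "\<bar>(- 30 * M^4 + 50 * M^3 - 30 * M^2 + 4 * M) / (480 * A^4)\<bar> \<le> (114 * M^4) / (480 * A^4)"
  proof -
    have "\<bar>(- 30 * M^4 + 50 * M^3 - 30 * M^2 + 4 * M) / (480 * A^4)\<bar> = \<bar>- 30 * M^4 + 50 * M^3 - 30 * M^2 + 4 * M\<bar> / (480 * A^4)" by (simp add: abs_divide)
    also have "\<dots> \<le> (114 * M^4) / (480 * A^4)" using pb2[of m] A unfolding M_def by (intro divide_right_mono) auto
    finally show ?thesis .
  qed
  have m4: "0 \<le> M^4 / A^4" using M0 by simp
  have e1: "M * (M^3 / (8 * A^4) + M^6 / (16 * A^6)) = M^4 / (8 * A^4) + M^7 / (16 * A^6)"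
    by (simp add: field_simps power_Suc[symmetric] del: power_Suc)
  have e2: "(114 * M^4) / (480 * A^4) = 114/480 * (M^4 / A^4)" "M^4 / (8 * A^4) = 1/8 * (M^4 / A^4)" "M^4 / (2 * A^4) = 1/2 * (M^4 / A^4)"
    by simp_all
  have "ln (kseq A m) - (M^3 / (12 * A^2) - 3 * M^5 / (160 * A^4))
     = (\<Sum>j<m. L j - Q j) + (- 3 * M^2 + 2 * M) / (12 * A^2) - 3/2 * ((- 30 * M^4 + 50 * M^3 - 30 * M^2 + 4 * M) / (480 * A^4))"
    using lnK sumQ sumee sumee2 t1 t2 t3 by argo
  hence "\<bar>ln (kseq A m) - (M^3 / (12 * A^2) - 3 * M^5 / (160 * A^4))\<bar> \<le> M^2 / (4 * A^2) + M^4 / (2 * A^4) + M^7 / (16 * A^6)"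
    using errsum b1 b2 m4 e1 e2 by (simp only:)
  thus ?thesis unfolding M_def .
qed

lemma count1_le: "is_partition lam n \<Longrightarrow> count lam 1 \<le> n"
proof -
  assume "is_partition lam n"
  hence s: "sum_mset lam = n" by (simp add: is_partition_def)
  have "lam = {#x \<in># lam. x = 1#} + {#x \<in># lam. \<not> x = 1#}" by (rule multiset_partition)
  hence "sum_mset lam = sum_mset {#x \<in># lam. x = 1#} + sum_mset {#x \<in># lam. \<not> x = 1#}"
    by (metis sum_mset.union)
  moreover have "sum_mset {#x \<in># lam. x = 1#} = count lam 1" by (simp add: filter_eq_replicate_mset)
  ultimately show ?thesis using s by linarith
qed

lemma final_bound:
  fixes \<delta> A :: real and m n :: nat
  assumes d: "0 < \<delta>" and n1: "n \<ge> 1" and mn: "m \<le> n"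
    and Ad: "A \<ge> \<delta> * real n powr (5/4)" and A2: "A \<ge> 2 * real n"
  shows "real m^2 / (4 * A^2) + real m^4 / (2 * A^4) + real m^7 / (16 * A^6)
     \<le> (1/\<delta> + 1/\<delta>^6) * real n powr (- 1/4)"
proof -
  define t where "t = real n powr (- 1/4)"
  define w where "w = real n / A"
  have n0: "real n > 0" using n1 by simp
  have A0: "A > 0" using A2 n0 by linarith
  have t0: "0 < t" unfolding t_def using n0 by simp
  have t1: "t \<le> 1" unfolding t_def using powr_mono[of "- 1/4" 0 "real n"] n1 by simp
  have w0: "0 \<le> w" unfolding w_def using A0 by simp
  have wh: "w \<le> 1/2" unfolding w_def using A0 A2 by (simp add: divide_le_eq)
  have wt: "w \<le> t / \<delta>"
  proof -
    have "real n powr (5/4) * t = real n powr (5/4 + - 1/4)"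
      unfolding t_def by (rule powr_add[symmetric])
    also have "\<dots> = real n" using n0 by simp
    finally have e: "real n powr (5/4) * t = real n" .
    have "\<delta> * real n powr (5/4) * t \<le> A * t" using Ad t0 by (intro mult_right_mono) auto
    hence "\<delta> * real n \<le> A * t" using e by (simp add: mult.assoc)
    hence "real n / A \<le> t / \<delta>" using A0 d by (simp add: field_simps)
    thus ?thesis unfolding w_def .
  qed
  define v where "v = real m / A"
  have v0: "0 \<le> v" unfolding v_def using A0 by simp
  have vw: "v \<le> w" unfolding v_def w_def using A0 mn by (simp add: divide_right_mono)
  have r1: "real m^2 / (4 * A^2) = v^2 / 4" "real m^4 / (2 * A^4) = v^4 / 2" "real m^7 / (16 * A^6) = v^6 * real m / 16"
    unfolding v_def using A0 by (simp_all add: power_divide field_simps flip: power_Suc)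
  have vv: "v^2 \<le> w^2" "v^4 \<le> w^4" "v^6 \<le> w^6" using v0 vw by (auto intro!: power_mono)
  have w2: "w^2 \<le> w * (1/2)" unfolding power2_eq_square using w0 wh by (intro mult_left_mono)
  have w21: "w^2 \<le> 1" using w2 wh by linarith
  have "w^4 = w^2 * w^2" by (simp add: power2_eq_square power4_eq_xxxx)
  also have "\<dots> \<le> w^2 * 1" using w21 by (intro mult_left_mono) auto
  finally have w4: "w^4 \<le> w^2" by simp
  have t4: "t^4 * real n = 1"
  proof -
    have "t^4 = real n powr (real 4 * (- 1/4))" unfolding t_def using n0 by (subst powr_power) auto
    also have "\<dots> = inverse (real n)" using n0 by (simp add: powr_minus)
    finally show ?thesis using n0 by simp
  qed
  have "w^6 \<le> (t/\<delta>)^6" using wt w0 by (intro power_mono)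
  hence "w^6 * real n \<le> (t/\<delta>)^6 * real n" using n0 by (intro mult_right_mono) auto
  also have "(t/\<delta>)^6 * real n = t^2 * (t^4 * real n) / \<delta>^6" by (simp add: power_divide field_simps flip: power_add)
  also have "\<dots> = t^2 / \<delta>^6" using t4 by simp
  also have "\<dots> \<le> t / \<delta>^6"
  proof -
    have "t^2 \<le> t * 1" unfolding power2_eq_square using t0 t1 by (intro mult_left_mono) auto
    thus ?thesis using d by (intro divide_right_mono) auto
  qed
  finally have w6: "w^6 * real n \<le> t / \<delta>^6" .
  have "v^6 * real m \<le> w^6 * real n" using vv(3) mn v0 by (intro mult_mono) auto
  have e: "(1/\<delta> + 1/\<delta>^6) * real n powr (- 1/4) = t/\<delta> + t/\<delta>^6" unfolding t_def by (simp add: field_simps)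
  have tt: "0 \<le> t/\<delta>" "0 \<le> t/\<delta>^6" using t0 d by simp_all
  show ?thesis unfolding r1 e using vv w2 w4 wt w6 \<open>v^6 * real m \<le> w^6 * real n\<close> tt by argo
qed

theorem lemma3p5:
  fixes c1 s \<delta> :: real
  assumes c1_pos: "c1 > 0"
    and c1_bound: "\<And>a i. a \<ge> 1 \<Longrightarrow> i \<ge> 1 \<Longrightarrow>
        exp (- c1 * (2 * real a) powr (- 2 * real i / 3)) \<le> g_ai a i \<and>
        g_ai a i \<le> exp (c1 * (2 * real a) powr (- 2 * real i / 3))"
    and s_pos: "s > 0"
    and delta_pos: "0 < \<delta>" and delta_lt: "\<delta> < delta0 c1 s"
  shows "\<exists>C>0. \<forall>n::nat. \<forall>lam a::nat. n \<ge> 1 \<longrightarrow> is_partition lam n \<longrightarrow>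
      real a \<ge> \<delta> * real n powr (5/4) \<longrightarrow> \<delta> * real n powr (5/4) \<ge> 2 * real n \<longrightarrow>
      (\<exists>R. K_a1 a (count lam 1) =
              exp (real (count lam 1) ^ 3 / (12 * real a ^ 2)
                   - 3 * real (count lam 1) ^ 5 / (160 * real a ^ 4) + R)
           \<and> \<bar>R\<bar> \<le> C * real n powr (- 1/4))"
proof (rule exI[of _ "1/\<delta> + 1/\<delta>^6"], intro conjI allI impI)
  show "0 < 1/\<delta> + 1/\<delta>^6" using delta_pos by (simp add: add_pos_pos)
  fix n :: nat and lam and a :: nat
  assume n1: "n \<ge> 1" and lp: "is_partition lam n" and ad: "real a \<ge> \<delta> * real n powr (5/4)"
    and d2: "\<delta> * real n powr (5/4) \<ge> 2 * real n"
  define m where "m = count lam 1"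
  define A where "A = real a"
  have mn: "m \<le> n" unfolding m_def using lp by (rule count1_le)
  have A2: "A \<ge> 2 * real n" unfolding A_def using ad d2 by linarith
  have A0: "A > 0" using A2 n1 by simp
  have a1: "1 \<le> a" using A0 unfolding A_def by simp
  have ma: "m \<le> a" using A2 mn unfolding A_def by linarith
  have mA: "2 * real m \<le> A" using A2 mn by simp
  have K: "K_a1 a m = kseq A m" unfolding A_def by (rule K_kseq[OF a1 ma])
  have Kp: "kseq A m > 0" using kseq_pos A0 by simp
  define main where "main = real m ^ 3 / (12 * A ^ 2) - 3 * real m ^ 5 / (160 * A ^ 4)"
  define R where "R = ln (kseq A m) - main"
  have "K_a1 a m = exp (main + R)" unfolding R_def K using Kp by simp
  moreover have "\<bar>R\<bar> \<le> (1/\<delta> + 1/\<delta>^6) * real n powr (- 1/4)"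
  proof -
    have "\<bar>R\<bar> \<le> real m^2 / (4 * A^2) + real m^4 / (2 * A^4) + real m^7 / (16 * A^6)"
      unfolding R_def main_def by (rule lnK_bound[OF A0 mA])
    also have "\<dots> \<le> (1/\<delta> + 1/\<delta>^6) * real n powr (- 1/4)"
      by (rule final_bound[OF delta_pos n1 mn _ A2]) (use ad in \<open>simp add: A_def\<close>)
    finally show ?thesis .
  qed
  ultimately show "\<exists>R. K_a1 a (count lam 1) =
              exp (real (count lam 1) ^ 3 / (12 * real a ^ 2)
                   - 3 * real (count lam 1) ^ 5 / (160 * real a ^ 4) + R)
           \<and> \<bar>R\<bar> \<le> (1/\<delta> + 1/\<delta>^6) * real n powr (- 1/4)"
    unfolding m_def[symmetric] A_def[symmetric] main_def[symmetric] by blast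
qed

end
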